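(* Let $\mathcal{C}$ be any class of connected graphs, and for each positive integer $n$ let $\mathcal{C}_n$ denote the set of isomorphism classes of $n$-vertex graphs in $\mathcal{C}$. Then $\mathcal{C}$ has local complexity at most $\log(|\mathcal{C}_n|)+O(\log n)$. In particular, if $\mathcal{C}$ is tiny (i.e., there is a constant $c>0$ with $|\mathcal{C}_n|\le c^n$ for all $n$), then the local complexity of $\mathcal{C}$ is $O(n)$.
   Context: All graphs are finite, simple, undirected and connected; logarithms are binary. The vertices of an $n$-vertex graph $G$ carry distinct identifiers from $\{1,\dots,\mathrm{poly}(n)\}$. A proof for $G$ is a map $P:V(G)\to\{0,1\}^*$ (it may depend on the identifiers); its size is the maximum length of a certificate $P(v)$. A prover for a class $\mathcal{G}$ maps each $G\in\mathcal{G}$ to a proof for $G$. A verifier $\mathcal{A}$ maps $(G,P,v)$ to $\{0,1\}$ ($v$ accepts if the output is 1); it is local if the output of $v$ depends only on the identifiers and certificates of the vertices in the closed neighborhood $N[v]$ (optionally also on the graph induced by $N[v]$). A proof labeling scheme for $\mathcal{G}$ is a prover–local verifier pair such that: if $G\in\mathcal{G}$, every vertex accepts the prover's proof; if $G\notin\mathcal{G}$, for every proof some vertex rejects. Its complexity is the maximum size of a proof assigned by the prover to an $n$-vertex graph of $\mathcal{G}$, as a function of $n$; the local complexity of $\mathcal{G}$ is the minimum complexity of a proof labeling scheme for $\mathcal{G}$. *)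

theory Defs
  imports Complex_Main
begin

text \<open>An identified graph: the vertices are their (distinct) identifiers, natural numbers.
  A graph is a pair (V, E) with E a symmetric irreflexive relation on V.\<close>
type_synonym graph = "nat set \<times> (nat \<times> nat) set"

definition is_graph :: "graph \<Rightarrow> bool" where
  "is_graph G \<longleftrightarrow> finite (fst G) \<and> fst G \<noteq> {} \<and> snd G \<subseteq> fst G \<times> fst G
     \<and> sym (snd G) \<and> (\<forall>v. (v, v) \<notin> snd G)"

definition connected_graph :: "graph \<Rightarrow> bool" where
  "connected_graph G \<longleftrightarrow> is_graph G \<and> (\<forall>u\<in>fst G. \<forall>v\<in>fst G. (u, v) \<in> (snd G)\<^sup>*)"

definition graph_iso :: "graph \<Rightarrow> graph \<Rightarrow> bool" where
  "graph_iso G H \<longleftrightarrow> (\<exists>f. bij_betw f (fst G) (fst H) \<and>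
      (\<forall>u\<in>fst G. \<forall>v\<in>fst G. (u, v) \<in> snd G \<longleftrightarrow> (f u, f v) \<in> snd H))"

definition graph_class :: "graph set \<Rightarrow> bool" where
  "graph_class C \<longleftrightarrow> (\<forall>G\<in>C. connected_graph G) \<and>
      (\<forall>G H. G \<in> C \<longrightarrow> is_graph H \<longrightarrow> graph_iso G H \<longrightarrow> H \<in> C)"

definition num_iso_classes :: "graph set \<Rightarrow> nat \<Rightarrow> nat" where
  "num_iso_classes C n =
     card ({G \<in> C. card (fst G) = n} // {(G, H). graph_iso G H})"

definition ids_ok :: "nat \<Rightarrow> graph \<Rightarrow> bool" where
  "ids_ok d G \<longleftrightarrow> fst G \<subseteq> {1 .. card (fst G) ^ d}"

definition closed_nbhd :: "graph \<Rightarrow> nat \<Rightarrow> nat set" where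
  "closed_nbhd G v = insert v {u. (v, u) \<in> snd G}"

type_synonym certs = "nat \<Rightarrow> bool list"
type_synonym verifier = "graph \<Rightarrow> certs \<Rightarrow> nat \<Rightarrow> bool"
type_synonym prover = "graph \<Rightarrow> certs"

definition local_verifier :: "verifier \<Rightarrow> bool" where
  "local_verifier A \<longleftrightarrow> (\<forall>G H P Q v. connected_graph G \<longrightarrow> connected_graph H \<longrightarrow>
      v \<in> fst G \<longrightarrow> v \<in> fst H \<longrightarrow> closed_nbhd G v = closed_nbhd H v \<longrightarrow>
      (\<forall>u\<in>closed_nbhd G v. P u = Q u) \<longrightarrow> A G P v = A H Q v)"

definition pls :: "nat \<Rightarrow> graph set \<Rightarrow> prover \<Rightarrow> verifier \<Rightarrow> bool" where
  "pls d C Pr A \<longleftrightarrow> local_verifier A \<and>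
     (\<forall>G. connected_graph G \<longrightarrow> ids_ok d G \<longrightarrow> G \<in> C \<longrightarrow> (\<forall>v\<in>fst G. A G (Pr G) v)) \<and>
     (\<forall>G. connected_graph G \<longrightarrow> ids_ok d G \<longrightarrow> G \<notin> C \<longrightarrow> (\<forall>P. \<exists>v\<in>fst G. \<not> A G P v))"

definition pls_size_bounded :: "nat \<Rightarrow> graph set \<Rightarrow> prover \<Rightarrow> (nat \<Rightarrow> real) \<Rightarrow> bool" where
  "pls_size_bounded d C Pr f \<longleftrightarrow>
     (\<forall>G. connected_graph G \<longrightarrow> ids_ok d G \<longrightarrow> G \<in> C \<longrightarrow>
        (\<forall>v\<in>fst G. real (length (Pr G v)) \<le> f (card (fst G))))"

definition tiny :: "graph set \<Rightarrow> bool" where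
  "tiny C \<longleftrightarrow> (\<exists>c::real. c > 0 \<and> (\<forall>n\<ge>1. real (num_iso_classes C n) \<le> c ^ n))"

end

theory Submission
  imports Defs
begin


definition isorel :: "(graph \<times> graph) set" where
  "isorel = {(G, H). graph_iso G H}"

lemma iso_refl: "graph_iso G G"
  unfolding graph_iso_def by (rule exI[of _ id]) auto

lemma iso_sym: assumes "graph_iso G H" shows "graph_iso H G"
proof -
  obtain f where f: "bij_betw f (fst G) (fst H)"
    and e: "\<forall>u\<in>fst G. \<forall>v\<in>fst G. (u, v) \<in> snd G \<longleftrightarrow> (f u, f v) \<in> snd H"
    using assms unfolding graph_iso_def by blast
  define g where "g = inv_into (fst G) f"
  have g: "bij_betw g (fst H) (fst G)" unfolding g_def by (rule bij_betw_inv_into[OF f])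
  have "\<forall>u\<in>fst H. \<forall>v\<in>fst H. (u, v) \<in> snd H \<longleftrightarrow> (g u, g v) \<in> snd G"
  proof (intro ballI)
    fix u v assume u: "u \<in> fst H" and v: "v \<in> fst H"
    have gu: "g u \<in> fst G" "f (g u) = u" using u f g unfolding g_def
      by (auto simp: bij_betw_def f_inv_into_f inv_into_into)
    have gv: "g v \<in> fst G" "f (g v) = v" using v f g unfolding g_def
      by (auto simp: bij_betw_def f_inv_into_f inv_into_into)
    show "(u, v) \<in> snd H \<longleftrightarrow> (g u, g v) \<in> snd G" using e gu gv by metis
  qed
  thus ?thesis using g unfolding graph_iso_def by blast
qed

lemma iso_trans: assumes "graph_iso G H" "graph_iso H K" shows "graph_iso G K"
proof -
  obtain f where f: "bij_betw f (fst G) (fst H)"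
    and e: "\<forall>u\<in>fst G. \<forall>v\<in>fst G. (u, v) \<in> snd G \<longleftrightarrow> (f u, f v) \<in> snd H"
    using assms unfolding graph_iso_def by blast
  obtain g where g: "bij_betw g (fst H) (fst K)"
    and e2: "\<forall>u\<in>fst H. \<forall>v\<in>fst H. (u, v) \<in> snd H \<longleftrightarrow> (g u, g v) \<in> snd K"
    using assms unfolding graph_iso_def by blast
  have "bij_betw (g \<circ> f) (fst G) (fst K)" using f g by (rule bij_betw_trans)
  moreover have "\<forall>u\<in>fst G. \<forall>v\<in>fst G. (u, v) \<in> snd G \<longleftrightarrow> ((g \<circ> f) u, (g \<circ> f) v) \<in> snd K"
  proof (intro ballI)
    fix u v assume u: "u \<in> fst G" and v: "v \<in> fst G"
    have "f u \<in> fst H" "f v \<in> fst H" using u v f by (auto simp: bij_betw_def)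
    thus "(u, v) \<in> snd G \<longleftrightarrow> ((g \<circ> f) u, (g \<circ> f) v) \<in> snd K"
      using e e2 u v by simp
  qed
  ultimately show ?thesis unfolding graph_iso_def by blast
qed

lemma iso_copy: assumes "is_graph G"
  shows "\<exists>H. is_graph H \<and> fst H = {0..<card (fst G)} \<and> graph_iso G H"
proof -
  have fin: "finite (fst G)" and ne: "fst G \<noteq> {}" and sub: "snd G \<subseteq> fst G \<times> fst G"
    and sy: "sym (snd G)" and irr: "\<forall>v. (v, v) \<notin> snd G"
    using assms unfolding is_graph_def by auto
  obtain f where f: "bij_betw f (fst G) {0..<card (fst G)}" using ex_bij_betw_finite_nat[OF fin] by blast
  have inj: "inj_on f (fst G)" using f by (simp add: bij_betw_def)
  define H where "H = ({0..<card (fst G)}, map_prod f f ` snd G)"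
  have iff: "\<forall>u\<in>fst G. \<forall>v\<in>fst G. (u, v) \<in> snd G \<longleftrightarrow> (f u, f v) \<in> snd H"
  proof (intro ballI iffI)
    fix u v assume "u \<in> fst G" "v \<in> fst G" "(u, v) \<in> snd G"
    thus "(f u, f v) \<in> snd H" unfolding H_def by force
  next
    fix u v assume u: "u \<in> fst G" and v: "v \<in> fst G" and "(f u, f v) \<in> snd H"
    then obtain a b where ab: "(a, b) \<in> snd G" "f a = f u" "f b = f v" unfolding H_def by auto
    have "a \<in> fst G" "b \<in> fst G" using ab sub by auto
    hence "a = u" "b = v" using inj u v ab by (auto dest: inj_onD)
    thus "(u, v) \<in> snd G" using ab by simp
  qed
  have "is_graph H"
    unfolding is_graph_def
  proof (intro conjI allI)
    show "finite (fst H)" unfolding H_def by simp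
    show "fst H \<noteq> {}" unfolding H_def using ne fin by (simp add: card_gt_0_iff)
    show "snd H \<subseteq> fst H \<times> fst H" unfolding H_def using sub f
      by (auto simp: bij_betw_def)
    show "sym (snd H)" unfolding H_def using sy by (auto simp: sym_def)
    fix v show "(v, v) \<notin> snd H"
    proof
      assume "(v, v) \<in> snd H"
      then obtain a b where ab: "(a, b) \<in> snd G" "f a = v" "f b = v" unfolding H_def by auto
      have "a \<in> fst G" "b \<in> fst G" using ab sub by auto
      hence "a = b" using inj ab by (auto dest: inj_onD)
      thus False using ab irr by simp
    qed
  qed
  moreover have "fst H = {0..<card (fst G)}" unfolding H_def by simp
  moreover have "graph_iso G H" unfolding graph_iso_def using f iff H_def by auto
  ultimately show ?thesis by blast
qed



definition Qs :: "graph set \<Rightarrow> nat \<Rightarrow> graph set set" where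
  "Qs C n = {G \<in> C. card (fst G) = n} // isorel"

lemma Nc_eq: "num_iso_classes C n = card (Qs C n)"
  unfolding num_iso_classes_def Qs_def isorel_def ..

lemma isorel_Image: "isorel `` {G} = {H. graph_iso G H}"
  unfolding isorel_def by auto

lemma isorel_Image_eq: "graph_iso G H \<Longrightarrow> isorel `` {G} = isorel `` {H}"
  unfolding isorel_Image using iso_trans iso_sym by blast

lemma Qs_elem: "X \<in> Qs C n \<Longrightarrow> \<exists>G\<in>C. card (fst G) = n \<and> X = isorel `` {G}"
  unfolding Qs_def by (auto elim!: quotientE)

lemma Qs_intro: "G \<in> C \<Longrightarrow> card (fst G) = n \<Longrightarrow> isorel `` {G} \<in> Qs C n"
  unfolding Qs_def by (auto intro: quotientI)

lemma finite_Qs: assumes "graph_class C" shows "finite (Qs C n)"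
proof -
  have "Qs C n \<subseteq> (\<lambda>H. isorel `` {H}) ` ({{0..<n}} \<times> Pow ({0..<n} \<times> {0..<n}))"
  proof
    fix X assume "X \<in> Qs C n"
    then obtain G where G: "G \<in> C" "card (fst G) = n" "X = isorel `` {G}" using Qs_elem by blast
    have "is_graph G" using G assms unfolding graph_class_def connected_graph_def by blast
    then obtain H where H: "is_graph H" "fst H = {0..<n}" "graph_iso G H" using iso_copy G by blast
    have "H \<in> {{0..<n}} \<times> Pow ({0..<n} \<times> {0..<n})" using H
      by (cases H) (auto simp: is_graph_def)
    moreover have "X = isorel `` {H}" using G H isorel_Image_eq by blast
    ultimately show "X \<in> (\<lambda>H. isorel `` {H}) ` ({{0..<n}} \<times> Pow ({0..<n} \<times> {0..<n}))" by blast
  qed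
  thus ?thesis by (rule finite_subset) auto
qed

definition enum :: "graph set \<Rightarrow> nat \<Rightarrow> nat \<Rightarrow> graph set" where
  "enum C n = (SOME e. bij_betw e {0..<num_iso_classes C n} (Qs C n))"

lemma enum_bij: assumes "graph_class C"
  shows "bij_betw (enum C n) {0..<num_iso_classes C n} (Qs C n)"
proof -
  have "\<exists>e. bij_betw e {0..<num_iso_classes C n} (Qs C n)"
    using ex_bij_betw_nat_finite[OF finite_Qs[OF assms]] by (simp add: Nc_eq)
  thus ?thesis unfolding enum_def by (rule someI_ex)
qed

definition rep :: "graph set \<Rightarrow> nat \<Rightarrow> nat \<Rightarrow> graph" where
  "rep C n j = (SOME H. H \<in> enum C n j \<and> is_graph H \<and> fst H = {0..<n})"

lemma rep_props: assumes C: "graph_class C" and j: "j < num_iso_classes C n"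
  shows "rep C n j \<in> C \<and> connected_graph (rep C n j) \<and> fst (rep C n j) = {0..<n}
     \<and> rep C n j \<in> enum C n j"
proof -
  have "enum C n j \<in> Qs C n" using enum_bij[OF C, of n] j by (auto simp: bij_betw_def)
  then obtain G where G: "G \<in> C" "card (fst G) = n" "enum C n j = isorel `` {G}" using Qs_elem by blast
  have "is_graph G" using G C unfolding graph_class_def connected_graph_def by blast
  then obtain H where H: "is_graph H" "fst H = {0..<n}" "graph_iso G H" using iso_copy G by blast
  have "\<exists>H. H \<in> enum C n j \<and> is_graph H \<and> fst H = {0..<n}"
    using H G by (intro exI[of _ H]) (auto simp: isorel_Image)
  hence R: "rep C n j \<in> enum C n j \<and> is_graph (rep C n j) \<and> fst (rep C n j) = {0..<n}"
    unfolding rep_def by (rule someI_ex)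
  hence "graph_iso G (rep C n j)" using G by (auto simp: isorel_Image)
  hence "rep C n j \<in> C" using C G R unfolding graph_class_def by blast
  moreover have "connected_graph (rep C n j)" using C calculation unfolding graph_class_def by blast
  ultimately show ?thesis using R by blast
qed

lemma rep_exists: assumes C: "graph_class C" and G: "G \<in> C" "card (fst G) = n"
  shows "\<exists>j<num_iso_classes C n. graph_iso G (rep C n j)"
proof -
  have "isorel `` {G} \<in> Qs C n" using Qs_intro G by blast
  then obtain j where j: "j < num_iso_classes C n" "enum C n j = isorel `` {G}"
    using enum_bij[OF C, of n] unfolding bij_betw_def by (metis atLeastLessThan_iff imageE)
  hence "rep C n j \<in> isorel `` {G}" using rep_props[OF C j(1)] by simp
  thus ?thesis using j by (auto simp: isorel_Image)
qed



definition bits :: "nat \<Rightarrow> nat \<Rightarrow> bool list" where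
  "bits w x = map (bit x) [0..<w]"

definition bl :: "nat \<Rightarrow> nat" where
  "bl x = (LEAST w. x < 2 ^ w)"

definition Wd :: "graph set \<Rightarrow> nat \<Rightarrow> nat \<Rightarrow> nat" where
  "Wd C d n = (LEAST w. num_iso_classes C n * n ^ (d + 1) \<le> 2 ^ w)"

definition code :: "graph set \<Rightarrow> nat \<Rightarrow> nat \<Rightarrow> nat \<Rightarrow> nat \<Rightarrow> nat" where
  "code C n j p r = j + num_iso_classes C n * (p + n * (r - 1))"

definition enc :: "graph set \<Rightarrow> nat \<Rightarrow> nat \<times> nat \<times> nat \<times> nat \<Rightarrow> bool list" where
  "enc C d t = (case t of (n, j, p, r) \<Rightarrow>
     replicate (bl n) True @ False # bits (bl n) n @ bits (Wd C d n) (code C n j p r))"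

definition TT :: "graph set \<Rightarrow> nat \<Rightarrow> (nat \<times> nat \<times> nat \<times> nat) set" where
  "TT C d = {(n, j, p, r). 1 \<le> n \<and> j < num_iso_classes C n \<and> p < n \<and> 1 \<le> r \<and> r \<le> n ^ d}"

lemma bits_inj: assumes "x < 2 ^ w" "y < 2 ^ w" "bits w x = bits w y" shows "x = y"
proof -
  have b: "\<And>i. i < w \<Longrightarrow> bit x i = bit y i"
  proof -
    fix i assume "i < w"
    hence "bits w x ! i = bit x i" "bits w y ! i = bit y i" by (auto simp: bits_def)
    thus "bit x i = bit y i" using assms(3) by simp
  qed
  have "take_bit w x = x" "take_bit w y = y" using assms by (auto simp: take_bit_nat_eq_self_iff)
  hence "x = take_bit w x" "y = take_bit w y" by auto
  moreover have "take_bit w x = take_bit w y"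
    by (rule bit_eqI) (auto simp: bit_take_bit_iff b)
  ultimately show ?thesis by simp
qed

lemma length_bits[simp]: "length (bits w x) = w" by (simp add: bits_def)

lemma rep_inj: "replicate a True @ False # xs = replicate b True @ False # ys \<Longrightarrow> a = b \<and> xs = ys"
proof (induction a arbitrary: b)
  case 0 thus ?case by (cases b) auto
next
  case (Suc a) thus ?case by (cases b) auto
qed

lemma bl_ok: "n < 2 ^ bl n"
  unfolding bl_def by (rule LeastI[of _ n]) simp

lemma Wd_ok: "num_iso_classes C n * n ^ (d + 1) \<le> 2 ^ Wd C d n"
  unfolding Wd_def by (rule LeastI[of _ "num_iso_classes C n * n ^ (d + 1)"]) (simp add: less_imp_le)

lemma code_bound: assumes "(n, j, p, r) \<in> TT C d"
  shows "code C n j p r < num_iso_classes C n * n ^ (d + 1)"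
proof -
  let ?N = "num_iso_classes C n"
  have a: "j < ?N" "p < n" "1 \<le> r" "r \<le> n ^ d" using assms by (auto simp: TT_def)
  have "p + n * (r - 1) < n * r" using a by (cases r) auto
  also have "n * r \<le> n ^ (d + 1)" using a by simp
  finally have q: "p + n * (r - 1) + 1 \<le> n ^ (d + 1)" by simp
  have "code C n j p r < ?N + ?N * (p + n * (r - 1))" using a unfolding code_def by simp
  also have "\<dots> = ?N * (p + n * (r - 1) + 1)" by (simp add: algebra_simps)
  also have "\<dots> \<le> ?N * n ^ (d + 1)" using q by (rule mult_left_mono) simp
  finally show ?thesis .
qed

lemma code_inj: assumes "(n, j, p, r) \<in> TT C d" "(n, j', p', r') \<in> TT C d"
  "code C n j p r = code C n j' p' r'"
  shows "j = j' \<and> p = p' \<and> r = r'"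
proof -
  let ?N = "num_iso_classes C n"
  have a: "j < ?N" "p < n" "1 \<le> r" "j' < ?N" "p' < n" "1 \<le> r'" using assms by (auto simp: TT_def)
  have e: "j + ?N * (p + n * (r - 1)) = j' + ?N * (p' + n * (r' - 1))" using assms(3) by (simp add: code_def)
  have "(j + ?N * (p + n * (r - 1))) mod ?N = j" using a by simp
  moreover have "(j' + ?N * (p' + n * (r' - 1))) mod ?N = j'" using a by simp
  ultimately have jj: "j = j'" using e by metis
  have "(j + ?N * (p + n * (r - 1))) div ?N = p + n * (r - 1)" using a by simp
  moreover have "(j' + ?N * (p' + n * (r' - 1))) div ?N = p' + n * (r' - 1)" using a by simp
  ultimately have e2: "p + n * (r - 1) = p' + n * (r' - 1)" using e by metis
  have "(p + n * (r - 1)) mod n = p" "(p' + n * (r' - 1)) mod n = p'" using a by simp_all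
  hence pp: "p = p'" using e2 by metis
  have "(p + n * (r - 1)) div n = r - 1" "(p' + n * (r' - 1)) div n = r' - 1" using a by simp_all
  hence "r - 1 = r' - 1" using e2 by metis
  hence "r = r'" using a by simp
  thus ?thesis using jj pp by simp
qed

lemma enc_inj: "inj_on (enc C d) (TT C d)"
proof (rule inj_onI)
  fix s t assume s: "s \<in> TT C d" and t: "t \<in> TT C d" and e: "enc C d s = enc C d t"
  obtain n j p r where sd: "s = (n, j, p, r)" by (cases s) auto
  obtain n' j' p' r' where td: "t = (n', j', p', r')" by (cases t) auto
  have e1: "replicate (bl n) True @ False # (bits (bl n) n @ bits (Wd C d n) (code C n j p r)) =
        replicate (bl n') True @ False # (bits (bl n') n' @ bits (Wd C d n') (code C n' j' p' r'))"
    using e unfolding sd td enc_def by simp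
  from rep_inj[OF e1] have b: "bl n = bl n'"
    and r: "bits (bl n) n @ bits (Wd C d n) (code C n j p r) = bits (bl n') n' @ bits (Wd C d n') (code C n' j' p' r')"
    by auto
  from r b have "bits (bl n) n = bits (bl n) n'" and r2: "bits (Wd C d n) (code C n j p r) = bits (Wd C d n') (code C n' j' p' r')"
    by (auto simp: append_eq_append_conv)
  hence nn: "n = n'" using bl_ok[of n] bl_ok[of n'] b bits_inj by metis
  have "code C n j p r < 2 ^ Wd C d n" using code_bound[OF s[unfolded sd]] Wd_ok[of C n d] by linarith
  moreover have "code C n j' p' r' < 2 ^ Wd C d n" using code_bound[OF t[unfolded td nn[symmetric]]] Wd_ok[of C n d] by linarith
  ultimately have "code C n j p r = code C n j' p' r'" using r2 nn bits_inj by metis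
  hence "j = j' \<and> p = p' \<and> r = r'" using code_inj s t nn sd td by blast
  thus "s = t" using sd td nn by simp
qed

lemma least_log: assumes "(1::nat) \<le> M" "M \<le> 2 ^ w" "\<And>v. M \<le> 2 ^ v \<Longrightarrow> w \<le> v"
  shows "real w \<le> log 2 M + 1"
proof (cases w)
  case 0 thus ?thesis using assms by simp
next
  case (Suc v)
  have "\<not> M \<le> 2 ^ v" using assms(3)[of v] Suc by auto
  hence "2 ^ v \<le> M" by simp
  hence "real v \<le> log 2 M" using le_log2_of_power by blast
  thus ?thesis using Suc by simp
qed

lemma bl_log: assumes "1 \<le> n" shows "real (bl n) \<le> log 2 n + 1"
proof (cases "bl n")
  case 0 thus ?thesis using assms by simp
next
  case (Suc v)
  have "\<not> n < 2 ^ v" using not_less_Least[of v "\<lambda>w. n < 2 ^ w"] Suc unfolding bl_def by auto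
  hence "2 ^ v \<le> n" by simp
  hence "real v \<le> log 2 n" using le_log2_of_power by blast
  thus ?thesis using Suc by simp
qed

lemma Wd_log: assumes "1 \<le> n" "1 \<le> num_iso_classes C n"
  shows "real (Wd C d n) \<le> log 2 (num_iso_classes C n) + real (d + 1) * log 2 n + 1"
proof -
  let ?M = "num_iso_classes C n * n ^ (d + 1)"
  have M1: "1 \<le> ?M" using assms by simp
  have "real (Wd C d n) \<le> log 2 ?M + 1"
    apply (rule least_log[OF M1 Wd_ok])
    unfolding Wd_def by (rule Least_le)
  also have "log 2 ?M = log 2 (num_iso_classes C n) + real (d + 1) * log 2 n"
    using assms by (simp add: log_mult log_nat_power algebra_simps)
  finally show ?thesis .
qed

lemma enc_length: assumes "(n, j, p, r) \<in> TT C d"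
  shows "real (length (enc C d (n, j, p, r))) \<le>
    log 2 (num_iso_classes C n) + real (d + 4) * log 2 n + real (d + 4)"
proof -
  have a: "1 \<le> n" "1 \<le> num_iso_classes C n" using assms by (auto simp: TT_def)
  have l: "0 \<le> log 2 n" using a by simp
  have "real (length (enc C d (n, j, p, r))) = 2 * real (bl n) + 1 + real (Wd C d n)"
    by (simp add: enc_def)
  also have "\<dots> \<le> 2 * (log 2 n + 1) + 1 + (log 2 (num_iso_classes C n) + real (d + 1) * log 2 n + 1)"
    using bl_log[OF a(1)] Wd_log[OF a, of d] by argo
  also have "\<dots> \<le> log 2 (num_iso_classes C n) + real (d + 4) * log 2 n + real (d + 4)"
    using l by (simp add: algebra_simps)
  finally show ?thesis .
qed



definition dec :: "graph set \<Rightarrow> nat \<Rightarrow> bool list \<Rightarrow> nat \<times> nat \<times> nat \<times> nat" where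
  "dec C d w = inv_into (TT C d) (enc C d) w"

definition tn :: "nat \<times> nat \<times> nat \<times> nat \<Rightarrow> nat" where "tn t = fst t"
definition tj :: "nat \<times> nat \<times> nat \<times> nat \<Rightarrow> nat" where "tj t = fst (snd t)"
definition tp :: "nat \<times> nat \<times> nat \<times> nat \<Rightarrow> nat" where "tp t = fst (snd (snd t))"
definition tr :: "nat \<times> nat \<times> nat \<times> nat \<Rightarrow> nat" where "tr t = snd (snd (snd t))"

definition check :: "graph set \<Rightarrow> nat \<Rightarrow> nat \<Rightarrow> nat set \<Rightarrow> certs \<Rightarrow> bool" where
  "check C d v N P \<longleftrightarrow>
     (\<forall>u\<in>N. P u \<in> enc C d ` TT C d) \<and>
     (\<forall>u\<in>N. tn (dec C d (P u)) = tn (dec C d (P v)) \<and> tj (dec C d (P u)) = tj (dec C d (P v))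
        \<and> tr (dec C d (P u)) = tr (dec C d (P v))) \<and>
     (tp (dec C d (P v)) = 0 \<longrightarrow> v = tr (dec C d (P v))) \<and>
     inj_on (\<lambda>u. tp (dec C d (P u))) (N - {v}) \<and>
     (\<lambda>u. tp (dec C d (P u))) ` (N - {v}) =
        {q. (tp (dec C d (P v)), q) \<in> snd (rep C (tn (dec C d (P v))) (tj (dec C d (P v))))}"

definition verif :: "graph set \<Rightarrow> nat \<Rightarrow> verifier" where
  "verif C d G P v = check C d v (closed_nbhd G v) (\<lambda>u. if u \<in> closed_nbhd G v then P u else [])"

lemma v_in_nbhd: "v \<in> closed_nbhd G v" by (simp add: closed_nbhd_def)

lemma check_cong: assumes "v \<in> N" "\<forall>u\<in>N. P u = Q u" shows "check C d v N P = check C d v N Q"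
proof -
  have a: "P v = Q v" using assms by blast
  have b: "inj_on (\<lambda>u. tp (dec C d (P u))) (N - {v}) = inj_on (\<lambda>u. tp (dec C d (Q u))) (N - {v})"
    by (rule inj_on_cong) (use assms in auto)
  have c: "(\<lambda>u. tp (dec C d (P u))) ` (N - {v}) = (\<lambda>u. tp (dec C d (Q u))) ` (N - {v})"
    by (rule image_cong) (use assms in auto)
  show ?thesis unfolding check_def a b c using assms by auto
qed

lemma verif_eq: "verif C d G P v = check C d v (closed_nbhd G v) P"
  unfolding verif_def by (rule check_cong) (auto simp: v_in_nbhd)

lemma local_verif: "local_verifier (verif C d)"
  unfolding local_verifier_def
proof (intro allI impI)
  fix G H :: graph and P Q :: certs and v
  assume e: "closed_nbhd G v = closed_nbhd H v" and pq: "\<forall>u\<in>closed_nbhd G v. P u = Q u"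
  have "(\<lambda>u. if u \<in> closed_nbhd G v then P u else []) = (\<lambda>u. if u \<in> closed_nbhd H v then Q u else [])"
    using e pq by auto
  thus "verif C d G P v = verif C d H Q v" unfolding verif_def e by simp
qed

lemma dec_enc: "t \<in> TT C d \<Longrightarrow> dec C d (enc C d t) = t"
  unfolding dec_def by (rule inv_into_f_f[OF enc_inj])

lemma nbhd_minus: "is_graph G \<Longrightarrow> closed_nbhd G v - {v} = {w. (v, w) \<in> snd G}"
  unfolding closed_nbhd_def is_graph_def by auto

lemma nbhd_sub: "is_graph G \<Longrightarrow> v \<in> fst G \<Longrightarrow> closed_nbhd G v \<subseteq> fst G"
  unfolding closed_nbhd_def is_graph_def by auto



lemma checkD:
  assumes "check C d v N P"
  shows "\<forall>u\<in>N. P u \<in> enc C d ` TT C d"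
    "\<forall>u\<in>N. tn (dec C d (P u)) = tn (dec C d (P v)) \<and> tj (dec C d (P u)) = tj (dec C d (P v))
        \<and> tr (dec C d (P u)) = tr (dec C d (P v))"
    "tp (dec C d (P v)) = 0 \<longrightarrow> v = tr (dec C d (P v))"
    "inj_on (\<lambda>u. tp (dec C d (P u))) (N - {v})"
    "(\<lambda>u. tp (dec C d (P u))) ` (N - {v}) =
        {q. (tp (dec C d (P v)), q) \<in> snd (rep C (tn (dec C d (P v))) (tj (dec C d (P v))))}"
  using assms unfolding check_def by blast+

lemma soundness:
  assumes C: "graph_class C" and G: "connected_graph G"
    and acc: "\<forall>v\<in>fst G. verif C d G P v"
  shows "G \<in> C"
proof -
  have ig: "is_graph G" using G by (simp add: connected_graph_def)
  have sub: "snd G \<subseteq> fst G \<times> fst G" and sy: "sym (snd G)" and ne: "fst G \<noteq> {}"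
    using ig by (auto simp: is_graph_def)
  have reach: "\<forall>u\<in>fst G. \<forall>v\<in>fst G. (u, v) \<in> (snd G)\<^sup>*" using G by (simp add: connected_graph_def)
  define D where "D u = dec C d (P u)" for u
  have ck: "check C d v (closed_nbhd G v) P" if "v \<in> fst G" for v
    using acc that verif_eq by metis
  have inT: "D u \<in> TT C d \<and> enc C d (D u) = P u" if "u \<in> fst G" for u
  proof -
    have "P u \<in> enc C d ` TT C d" using checkD(1)[OF ck[OF that]] v_in_nbhd by blast
    thus ?thesis unfolding D_def dec_def by (auto simp: inv_into_into f_inv_into_f)
  qed
  obtain v0 where v0: "v0 \<in> fst G" using ne by blast
  define n where "n = tn (D v0)"
  define j where "j = tj (D v0)"
  define r where "r = tr (D v0)"
  define f where "f u = tp (D u)" for u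
  have same: "tn (D u) = n \<and> tj (D u) = j \<and> tr (D u) = r" if "u \<in> fst G" for u
  proof -
    have "(v0, u) \<in> (snd G)\<^sup>*" using reach v0 that by blast
    hence "u \<in> fst G \<and> tn (D u) = n \<and> tj (D u) = j \<and> tr (D u) = r"
    proof (induction rule: rtrancl_induct)
      case base thus ?case using v0 by (simp add: n_def j_def r_def)
    next
      case (step a b)
      have "b \<in> closed_nbhd G a" using step.hyps(2) by (simp add: closed_nbhd_def)
      moreover have "a \<in> fst G" using step.IH by simp
      ultimately have "tn (D b) = tn (D a) \<and> tj (D b) = tj (D a) \<and> tr (D b) = tr (D a)"
        using checkD(2)[OF ck[of a]] unfolding D_def by blast
      moreover have "b \<in> fst G" using step.hyps(2) sub by auto
      ultimately show ?case using step.IH by simp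
    qed
    thus ?thesis by simp
  qed
  have T0: "D v0 \<in> TT C d" using inT v0 by blast
  have n1: "1 \<le> n" and jN: "j < num_iso_classes C n"
    using T0 by (auto simp: TT_def n_def j_def tn_def tj_def)
  have fn: "f u < n" if "u \<in> fst G" for u
    using inT[OF that] same[OF that] by (auto simp: TT_def f_def tn_def tp_def)
  define H where "H = rep C n j"
  have HP: "H \<in> C" "connected_graph H" "fst H = {0..<n}" using rep_props[OF C jN] by (auto simp: H_def)
  have hg: "is_graph H" using HP by (simp add: connected_graph_def)
  have Hsym: "sym (snd H)" and Hsub: "snd H \<subseteq> fst H \<times> fst H" using hg by (auto simp: is_graph_def)
  have Hreach: "\<forall>u\<in>fst H. \<forall>v\<in>fst H. (u, v) \<in> (snd H)\<^sup>*" using HP by (simp add: connected_graph_def)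
  have loc_inj: "inj_on f {w. (u, w) \<in> snd G}" if "u \<in> fst G" for u
    using checkD(4)[OF ck[OF that]] nbhd_minus[OF ig, of u] unfolding f_def D_def by simp
  have loc_img: "f ` {w. (u, w) \<in> snd G} = {q. (f u, q) \<in> snd H}" if "u \<in> fst G" for u
  proof -
    have "(\<lambda>w. tp (D w)) ` {w. (u, w) \<in> snd G} =
        {q. (tp (D u), q) \<in> snd (rep C (tn (D u)) (tj (D u)))}"
      using checkD(5)[OF ck[OF that]] nbhd_minus[OF ig, of u] unfolding D_def by simp
    thus ?thesis using same[OF that] unfolding f_def H_def by simp
  qed
  have root: "u = r" if "u \<in> fst G" "f u = 0" for u
    using checkD(3)[OF ck[OF that(1)]] that same[OF that(1)] unfolding f_def D_def r_def by simp
  have edge: "(f u, f w) \<in> snd H" if "(u, w) \<in> snd G" for u w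
  proof -
    have "u \<in> fst G" using that sub by auto
    hence "f w \<in> f ` {w. (u, w) \<in> snd G}" using that by blast
    thus ?thesis using loc_img[OF \<open>u \<in> fst G\<close>] by simp
  qed
  have fib: "\<forall>x\<in>fst G. \<forall>y\<in>fst G. f x = q \<longrightarrow> f y = q \<longrightarrow> x = y" if "q \<in> fst H" for q
  proof -
    have "0 \<in> fst H" using HP n1 by simp
    hence "(0, q) \<in> (snd H)\<^sup>*" using Hreach that by blast
    thus ?thesis
    proof (induction rule: rtrancl_induct)
      case base thus ?case using root by blast
    next
      case (step p q)
      show ?case
      proof (intro ballI impI)
        fix x y assume x: "x \<in> fst G" and y: "y \<in> fst G" and fx: "f x = q" and fy: "f y = q"
        have qp: "(q, p) \<in> snd H" using step.hyps(2) Hsym by (auto simp: sym_def)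
        have "p \<in> f ` {w. (x, w) \<in> snd G}" using loc_img[OF x] qp fx by simp
        then obtain x' where x': "(x, x') \<in> snd G" "f x' = p" by auto
        have "p \<in> f ` {w. (y, w) \<in> snd G}" using loc_img[OF y] qp fy by simp
        then obtain y' where y': "(y, y') \<in> snd G" "f y' = p" by auto
        have "x' \<in> fst G" "y' \<in> fst G" using x' y' sub by auto
        hence xy: "x' = y'" using step.IH x' y' by blast
        have "(x', x) \<in> snd G" "(x', y) \<in> snd G" using x' y' sy xy by (auto simp: sym_def)
        thus "x = y" using loc_inj[OF \<open>x' \<in> fst G\<close>] fx fy by (auto dest: inj_onD)
      qed
    qed
  qed
  have inj: "inj_on f (fst G)"
  proof (rule inj_onI)
    fix x y assume xy: "x \<in> fst G" "y \<in> fst G" "f x = f y"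
    have "f x \<in> fst H" using fn xy(1) HP by simp
    from fib[OF this] have "\<forall>a\<in>fst G. \<forall>b\<in>fst G. f a = f x \<longrightarrow> f b = f x \<longrightarrow> a = b" .
    thus "x = y" using xy by metis
  qed
  have surj: "f ` fst G = fst H"
  proof
    show "f ` fst G \<subseteq> fst H" using fn HP by auto
    show "fst H \<subseteq> f ` fst G"
    proof
      fix q assume q: "q \<in> fst H"
      have "f v0 \<in> fst H" using fn v0 HP by simp
      hence "(f v0, q) \<in> (snd H)\<^sup>*" using Hreach q by blast
      thus "q \<in> f ` fst G"
      proof (induction rule: rtrancl_induct)
        case base thus ?case using v0 by blast
      next
        case (step p q)
        then obtain x where x: "x \<in> fst G" "p = f x" by blast
        have "q \<in> f ` {w. (x, w) \<in> snd G}" using loc_img[OF x(1)] step.hyps(2) x(2) by simp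
        then obtain w where "(x, w) \<in> snd G" "f w = q" by auto
        thus ?case using sub by force
      qed
    qed
  qed
  have refl: "(u, w) \<in> snd G" if uw: "u \<in> fst G" "w \<in> fst G" "(f u, f w) \<in> snd H" for u w
  proof -
    have "f w \<in> f ` {w. (u, w) \<in> snd G}" using loc_img[OF uw(1)] uw(3) by simp
    then obtain w' where "(u, w') \<in> snd G" "f w' = f w" by auto
    moreover have "w' \<in> fst G" using calculation sub by auto
    ultimately show ?thesis using inj uw by (auto dest: inj_onD)
  qed
  have "graph_iso G H" unfolding graph_iso_def
    using inj surj edge refl by (intro exI[of _ f]) (auto simp: bij_betw_def)
  hence "graph_iso H G" by (rule iso_sym)
  thus ?thesis using C HP ig unfolding graph_class_def by blast
qed



definition prv :: "graph set \<Rightarrow> nat \<Rightarrow> prover" where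
  "prv C d G u = (let n = card (fst G);
      jg = (SOME jg. fst jg < num_iso_classes C n \<and> bij_betw (snd jg) (fst G) {0..<n} \<and>
        (\<forall>a\<in>fst G. \<forall>b\<in>fst G. (a, b) \<in> snd G \<longleftrightarrow> (snd jg a, snd jg b) \<in> snd (rep C n (fst jg))))
    in enc C d (n, fst jg, snd jg u, inv_into (fst G) (snd jg) 0))"

lemma prv_char: assumes C: "graph_class C" and G: "G \<in> C"
  shows "\<exists>j g. j < num_iso_classes C (card (fst G)) \<and> bij_betw g (fst G) {0..<card (fst G)} \<and>
     (\<forall>a\<in>fst G. \<forall>b\<in>fst G. (a, b) \<in> snd G \<longleftrightarrow> (g a, g b) \<in> snd (rep C (card (fst G)) j)) \<and>
     (\<forall>u. prv C d G u = enc C d (card (fst G), j, g u, inv_into (fst G) g 0))"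
proof -
  let ?n = "card (fst G)"
  let ?Q = "\<lambda>jg. fst jg < num_iso_classes C ?n \<and> bij_betw (snd jg) (fst G) {0..<?n} \<and>
        (\<forall>a\<in>fst G. \<forall>b\<in>fst G. (a, b) \<in> snd G \<longleftrightarrow> (snd jg a, snd jg b) \<in> snd (rep C ?n (fst jg)))"
  obtain j where j: "j < num_iso_classes C ?n" "graph_iso G (rep C ?n j)" using rep_exists[OF C G] by blast
  have "fst (rep C ?n j) = {0..<?n}" using rep_props[OF C j(1)] by blast
  then obtain g where "bij_betw g (fst G) {0..<?n}"
    "\<forall>a\<in>fst G. \<forall>b\<in>fst G. (a, b) \<in> snd G \<longleftrightarrow> (g a, g b) \<in> snd (rep C ?n j)"
    using j(2) unfolding graph_iso_def by auto
  hence "?Q (j, g)" using j by simp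
  define jg where "jg = (SOME jg. ?Q jg)"
  have Q: "?Q jg" unfolding jg_def using \<open>?Q (j, g)\<close> by (rule someI)
  have pe: "\<forall>u. prv C d G u = enc C d (?n, fst jg, snd jg u, inv_into (fst G) (snd jg) 0)"
    unfolding prv_def Let_def jg_def by (rule allI, rule refl)
  show ?thesis using Q pe by blast
qed

lemma honest: assumes C: "graph_class C" and G: "G \<in> C" and ids: "ids_ok d G" and v: "v \<in> fst G"
  shows "verif C d G (prv C d G) v \<and>
    real (length (prv C d G v)) \<le> log 2 (num_iso_classes C (card (fst G))) +
       real (d + 4) * log 2 (card (fst G)) + real (d + 4)"
proof -
  let ?n = "card (fst G)"
  let ?P = "prv C d G"
  have cg: "connected_graph G" using C G by (simp add: graph_class_def)
  hence ig: "is_graph G" by (simp add: connected_graph_def)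
  have fin: "finite (fst G)" and ne: "fst G \<noteq> {}" and sub: "snd G \<subseteq> fst G \<times> fst G"
    using ig by (auto simp: is_graph_def)
  have n1: "1 \<le> ?n" using fin ne by (simp add: Suc_le_eq card_gt_0_iff)
  obtain j g where j: "j < num_iso_classes C ?n" and g: "bij_betw g (fst G) {0..<?n}"
    and e: "\<forall>a\<in>fst G. \<forall>b\<in>fst G. (a, b) \<in> snd G \<longleftrightarrow> (g a, g b) \<in> snd (rep C ?n j)"
    and p: "\<forall>u. ?P u = enc C d (?n, j, g u, inv_into (fst G) g 0)"
    using prv_char[OF C G] by blast
  define r where "r = inv_into (fst G) g 0"
  have zero: "0 \<in> g ` fst G" using g n1 by (auto simp: bij_betw_def)
  have rV: "r \<in> fst G" unfolding r_def using zero by (rule inv_into_into)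
  have gr: "g r = 0" unfolding r_def using zero by (rule f_inv_into_f)
  have r1: "1 \<le> r" "r \<le> ?n ^ d" using rV ids by (auto simp: ids_ok_def)
  have inj: "inj_on g (fst G)" using g by (simp add: bij_betw_def)
  have gu: "g u < ?n" if "u \<in> fst G" for u using g that by (auto simp: bij_betw_def)
  have TTu: "(?n, j, g u, r) \<in> TT C d" if "u \<in> fst G" for u
    using n1 j gu[OF that] r1 by (simp add: TT_def)
  have Pu: "?P u = enc C d (?n, j, g u, r)" for u using p r_def by simp
  have Du: "dec C d (?P u) = (?n, j, g u, r)" if "u \<in> fst G" for u
    using Pu dec_enc[OF TTu[OF that]] by simp
  have Nsub: "closed_nbhd G v \<subseteq> fst G" using nbhd_sub[OF ig v] .
  have RP: "fst (rep C ?n j) = {0..<?n}" using rep_props[OF C j] by blast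
  have Hsub: "snd (rep C ?n j) \<subseteq> fst (rep C ?n j) \<times> fst (rep C ?n j)"
    using rep_props[OF C j] unfolding connected_graph_def is_graph_def by blast
  have c1: "\<forall>u\<in>closed_nbhd G v. ?P u \<in> enc C d ` TT C d" using Pu TTu Nsub by blast
  have c2: "\<forall>u\<in>closed_nbhd G v. tn (dec C d (?P u)) = tn (dec C d (?P v)) \<and> tj (dec C d (?P u)) = tj (dec C d (?P v))
        \<and> tr (dec C d (?P u)) = tr (dec C d (?P v))"
    using Du Nsub v by (auto simp: tn_def tj_def tr_def)
  have c3: "tp (dec C d (?P v)) = 0 \<longrightarrow> v = tr (dec C d (?P v))"
    using Du[OF v] inj gr rV v inj_onD[OF inj, of v r] by (auto simp: tp_def tr_def)
  have c4: "inj_on (\<lambda>u. tp (dec C d (?P u))) (closed_nbhd G v - {v})"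
  proof (rule inj_onI)
    fix a b assume a: "a \<in> closed_nbhd G v - {v}" and b: "b \<in> closed_nbhd G v - {v}"
      and ab: "tp (dec C d (?P a)) = tp (dec C d (?P b))"
    have "a \<in> fst G" "b \<in> fst G" using a b Nsub by auto
    thus "a = b" using ab Du inj by (auto simp: tp_def dest: inj_onD)
  qed
  have c5: "(\<lambda>u. tp (dec C d (?P u))) ` (closed_nbhd G v - {v}) =
        {q. (tp (dec C d (?P v)), q) \<in> snd (rep C (tn (dec C d (?P v))) (tj (dec C d (?P v))))}"
  proof -
    have "(\<lambda>u. tp (dec C d (?P u))) ` (closed_nbhd G v - {v}) = g ` {w. (v, w) \<in> snd G}"
    proof (rule image_cong)
      show "closed_nbhd G v - {v} = {w. (v, w) \<in> snd G}" using nbhd_minus[OF ig] .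
      fix u assume "u \<in> {w. (v, w) \<in> snd G}"
      hence "u \<in> fst G" using sub by auto
      thus "tp (dec C d (?P u)) = g u" using Du by (simp add: tp_def)
    qed
    also have "\<dots> = {q. (g v, q) \<in> snd (rep C ?n j)}"
    proof
      show "g ` {w. (v, w) \<in> snd G} \<subseteq> {q. (g v, q) \<in> snd (rep C ?n j)}"
        using e v sub by auto
      show "{q. (g v, q) \<in> snd (rep C ?n j)} \<subseteq> g ` {w. (v, w) \<in> snd G}"
      proof
        fix q assume q: "q \<in> {q. (g v, q) \<in> snd (rep C ?n j)}"
        hence "q \<in> {0..<?n}" using Hsub RP by auto
        hence "q \<in> g ` fst G" using g by (simp add: bij_betw_def)
        then obtain w where w: "w \<in> fst G" "q = g w" by blast
        hence "(v, w) \<in> snd G" using e v q by auto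
        thus "q \<in> g ` {w. (v, w) \<in> snd G}" using w by auto
      qed
    qed
    finally show ?thesis using Du[OF v] by (simp add: tp_def tn_def tj_def)
  qed
  have "check C d v (closed_nbhd G v) ?P" unfolding check_def using c1 c2 c3 c4 c5 by blast
  hence "verif C d G ?P v" using verif_eq by metis
  moreover have "real (length (?P v)) \<le> log 2 (num_iso_classes C ?n) + real (d + 4) * log 2 ?n + real (d + 4)"
    using Pu enc_length[OF TTu[OF v]] by simp
  ultimately show ?thesis by blast
qed



theorem theorem3p1:
  fixes C :: "graph set" and d :: nat
  assumes "graph_class C" and "d \<ge> 1"
  shows "(\<exists>Pr A K. pls d C Pr A \<and>
            pls_size_bounded d C Pr (\<lambda>n. log 2 (num_iso_classes C n) + K * log 2 n + K))
       \<and> (tiny C \<longrightarrow> (\<exists>Pr A K. pls d C Pr A \<and> pls_size_bounded d C Pr (\<lambda>n. K * real n)))"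
proof -
  note C = assms(1)
  have P: "pls d C (prv C d) (verif C d)"
    unfolding pls_def
  proof (intro conjI allI impI ballI)
    show "local_verifier (verif C d)" by (rule local_verif)
  next
    fix G v assume "ids_ok d G" "G \<in> C" "v \<in> fst G"
    thus "verif C d G (prv C d G) v" using honest[OF C] by blast
  next
    fix G P assume G: "connected_graph G" "G \<notin> C"
    show "\<exists>v\<in>fst G. \<not> verif C d G P v"
    proof (rule ccontr)
      assume "\<not> (\<exists>v\<in>fst G. \<not> verif C d G P v)"
      hence "\<forall>v\<in>fst G. verif C d G P v" by blast
      hence "G \<in> C" using soundness[OF C G(1)] by blast
      thus False using G by blast
    qed
  qed
  have S: "pls_size_bounded d C (prv C d)
      (\<lambda>n. log 2 (num_iso_classes C n) + real (d + 4) * log 2 n + real (d + 4))"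
    unfolding pls_size_bounded_def using honest[OF C] by blast
  have part2: "\<exists>Pr A K. pls d C Pr A \<and> pls_size_bounded d C Pr (\<lambda>n. K * real n)" if t: "tiny C"
  proof -
    obtain c :: real where c: "c > 0" "\<forall>n\<ge>1. real (num_iso_classes C n) \<le> c ^ n"
      using t unfolding tiny_def by blast
    define K where "K = max (log 2 c) 0 + 2 * real (d + 4)"
    have "pls_size_bounded d C (prv C d) (\<lambda>n. K * real n)"
      unfolding pls_size_bounded_def
    proof (intro allI impI ballI)
      fix G v assume G: "connected_graph G" "ids_ok d G" "G \<in> C" and v: "v \<in> fst G"
      let ?n = "card (fst G)"
      have ig: "is_graph G" using G by (simp add: connected_graph_def)
      have n1: "1 \<le> ?n" using ig by (auto simp: is_graph_def Suc_le_eq card_gt_0_iff)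
      obtain j where "j < num_iso_classes C ?n" using rep_exists[OF C G(3)] by blast
      hence N1: "1 \<le> num_iso_classes C ?n" by simp
      have "real (num_iso_classes C ?n) \<le> c ^ ?n" using c n1 by blast
      hence "log 2 (num_iso_classes C ?n) \<le> log 2 (c ^ ?n)" using N1 by (intro log_mono) auto
      also have "\<dots> = real ?n * log 2 c" using c by (simp add: log_nat_power)
      also have "\<dots> \<le> real ?n * max (log 2 c) 0" by (intro mult_left_mono) auto
      finally have a: "log 2 (num_iso_classes C ?n) \<le> real ?n * max (log 2 c) 0" .
      have "?n \<le> 2 ^ ?n" by (simp add: less_imp_le)
      hence "log 2 ?n \<le> ?n" using n1 by (intro log2_of_power_le) auto
      hence b: "real (d + 4) * log 2 ?n \<le> real (d + 4) * real ?n" by (intro mult_left_mono) auto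
      have cc: "real (d + 4) \<le> real (d + 4) * real ?n" using n1 by simp
      have "real (length (prv C d G v)) \<le> log 2 (num_iso_classes C ?n) + real (d + 4) * log 2 ?n + real (d + 4)"
        using honest[OF C G(3) G(2) v] by blast
      also have "\<dots> \<le> K * real ?n" using a b cc unfolding K_def by (simp add: algebra_simps)
      finally show "real (length (prv C d G v)) \<le> K * real ?n" .
    qed
    thus ?thesis using P by blast
  qed
  show ?thesis using P S part2 by blast
qed

end
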